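(* Let $\mathcal{V},\mathcal{W}$ be real separable Hilbert spaces, $c_1,c_2>0$, $T\in\mathbb{N}$, let $\sigma_1,\dots,\sigma_T$ be i.i.d. uniform on $\{-1,1\}$, and for each $t\in[T]$ let $(v_t,w_t):\{-1,1\}^{t-1}\to\{v\in\mathcal{V}:\|v\|\le c_1\}\times\{w\in\mathcal{W}:\|w\|\le c_2\}$ be arbitrary maps. Then for every $q\ge1$, \[\mathbb{E}\Big[\Big\|\sum_{t=1}^T\sigma_t\,v_t(\sigma_{<t})\otimes w_t(\sigma_{<t})\Big\|_q\Big]\le c_1c_2\,T^{\max\{\frac12,\frac1q\}}.\]
   Context: $\sigma_{<t}=(\sigma_1,\dots,\sigma_{t-1})$. For $a$ in a Hilbert space $H_1$ and $b$ in a Hilbert space $H_2$, $a\otimes b:H_2\to H_1$ denotes the rank-one operator $u\mapsto\langle b,u\rangle a$. For a compact (here finite-rank) operator $F$ with singular values $(s_n)$, $\|F\|_q=(\sum_n s_n^q)^{1/q}$ is its $q$-Schatten norm. *)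

theory Defs
  imports "HOL-Analysis.Analysis" "HOL-Probability.Probability"
begin

definition rank_one :: "'v::real_inner \<Rightarrow> 'w::real_inner \<Rightarrow> 'w \<Rightarrow> 'v" where
  "rank_one a b = (\<lambda>u. inner b u *\<^sub>R a)"

definition is_svd :: "('w::real_inner \<Rightarrow> 'v::real_inner) \<Rightarrow> nat \<Rightarrow> (nat \<Rightarrow> real)
    \<Rightarrow> (nat \<Rightarrow> 'v) \<Rightarrow> (nat \<Rightarrow> 'w) \<Rightarrow> bool" where
  "is_svd F n s e f \<longleftrightarrow>
     (\<forall>i<n. s i > 0) \<and>
     (\<forall>i<n. \<forall>j<n. inner (e i) (e j) = (if i = j then 1 else 0)) \<and>
     (\<forall>i<n. \<forall>j<n. inner (f i) (f j) = (if i = j then 1 else 0)) \<and>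
     F = (\<lambda>u. \<Sum>i<n. s i *\<^sub>R rank_one (e i) (f i) u)"

definition schatten_norm :: "real \<Rightarrow> ('w::real_inner \<Rightarrow> 'v::real_inner) \<Rightarrow> real" where
  "schatten_norm q F =
     (SOME r. \<exists>n s e f. is_svd F n s e f \<and> r = (\<Sum>i<n. s i powr q) powr (1 / q))"

text \<open>Sign sequences of length T: the uniform distribution on this set is the law of
  T i.i.d. Rademacher variables.\<close>
definition sign_seqs :: "nat \<Rightarrow> real list set" where
  "sign_seqs T = {\<sigma>. length \<sigma> = T \<and> set \<sigma> \<subseteq> {-1, 1}}"

end

theory Submission
  imports Defs
begin


definition orthonormal_list :: "'a::real_inner list \<Rightarrow> bool" where
  "orthonormal_list L \<longleftrightarrow> (\<forall>i<length L. \<forall>j<length L. inner (L!i) (L!j) = (if i = j then 1 else 0))"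

lemma onl_distinct: "orthonormal_list L \<Longrightarrow> distinct L"
  unfolding orthonormal_list_def distinct_conv_nth by (metis zero_neq_one)

lemma onl_norm: "orthonormal_list L \<Longrightarrow> x \<in> set L \<Longrightarrow> norm x = 1"
  unfolding orthonormal_list_def by (metis in_set_conv_nth norm_eq_1)

lemma onl_orth: "orthonormal_list L \<Longrightarrow> x \<in> set L \<Longrightarrow> y \<in> set L \<Longrightarrow> x \<noteq> y \<Longrightarrow> inner x y = 0"
  unfolding orthonormal_list_def by (metis in_set_conv_nth)

lemma onl_independent: "orthonormal_list L \<Longrightarrow> independent (set L)"
  apply (rule pairwise_orthogonal_independent)
   apply (auto simp: pairwise_def orthogonal_def onl_orth)
  using onl_norm by fastforce

lemma onl_snoc:
  assumes "orthonormal_list L" "norm y = 1" "\<And>x. x \<in> set L \<Longrightarrow> inner x y = 0"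
  shows "orthonormal_list (L @ [y])"
  using assms unfolding orthonormal_list_def
  apply (auto simp: nth_append less_Suc_eq inner_commute norm_eq_1)
  by (metis inner_commute nth_mem)+

definition proj :: "'a::real_inner list \<Rightarrow> 'a \<Rightarrow> 'a" where
  "proj L u = (\<Sum>k<length L. inner (L!k) u *\<^sub>R L!k)"

lemma proj_in_span: "proj L u \<in> span (set L)"
  unfolding proj_def by (intro span_sum span_mul span_base) auto

lemma proj_orth:
  assumes "orthonormal_list L" "x \<in> set L"
  shows "inner x (u - proj L u) = 0"
proof -
  obtain j where j: "j < length L" "x = L!j" using assms(2) by (metis in_set_conv_nth)
  have "inner x (proj L u) = (\<Sum>k<length L. inner (L!k) u * inner (L!j) (L!k))"
    unfolding proj_def j by (simp add: inner_sum_right)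
  also have "\<dots> = (\<Sum>k<length L. if k = j then inner (L!j) u else 0)"
    using assms(1) j(1) unfolding orthonormal_list_def by (intro sum.cong) auto
  also have "\<dots> = inner x u" using j by simp
  finally show ?thesis by (simp add: inner_diff_right)
qed

lemma orth_span:
  assumes "\<And>x. x \<in> S \<Longrightarrow> inner x u = 0" "y \<in> span S"
  shows "inner y u = 0"
  using orthogonal_to_span[OF assms(2), of u] assms(1)
  by (simp add: orthogonal_def inner_commute)

lemma span_proj:
  assumes "orthonormal_list L" "u \<in> span (set L)"
  shows "proj L u = u"
proof -
  have "inner (u - proj L u) (u - proj L u) = 0"
  proof -
    have a: "u - proj L u \<in> span (set L)"
      by (simp add: assms(2) proj_in_span span_diff)
    show ?thesis
      by (rule orth_span[OF _ a]) (simp add: assms(1) proj_orth)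
  qed
  then show ?thesis by simp
qed

lemma gs_extend:
  fixes xs :: "'a::real_inner list"
  shows "orthonormal_list L \<Longrightarrow> \<exists>L'. orthonormal_list (L @ L') \<and> span (set (L @ L')) = span (set L \<union> set xs)"
proof (induction xs arbitrary: L)
  case Nil
  then show ?case by (intro exI[of _ "[]"]) auto
next
  case (Cons x xs)
  define r where "r = x - proj L x"
  show ?case
  proof (cases "r = 0")
    case True
    then have xs: "x \<in> span (set L)" unfolding r_def
      by (metis eq_iff_diff_eq_0 proj_in_span)
    obtain L' where L': "orthonormal_list (L @ L')" "span (set (L @ L')) = span (set L \<union> set xs)"
      using Cons by blast
    have "span (set L \<union> set xs) = span (set L \<union> set (x # xs))"
      using xs unfolding span_eq by (auto intro: span_base span_mono[THEN subsetD, of "set L"])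
    then show ?thesis using L' by metis
  next
    case False
    define y where "y = r /\<^sub>R norm r"
    have ny: "norm y = 1" using False by (simp add: y_def)
    have oy: "inner z y = 0" if "z \<in> set L" for z
      using proj_orth[OF Cons.prems that, of x] by (simp add: y_def r_def)
    have on: "orthonormal_list (L @ [y])" by (rule onl_snoc[OF Cons.prems ny oy])
    obtain L' where L': "orthonormal_list (L @ [y] @ L')" "span (set (L @ [y]) \<union> set xs) = span (set ((L @ [y]) @ L'))"
      using Cons.IH[OF on] by auto
    have pj: "proj L x \<in> span (set L \<union> set (x#xs))"
      using proj_in_span span_mono[of "set L" "set L \<union> set (x#xs)"] by blast
    have yspan: "y \<in> span (set L \<union> set (x # xs))"
      unfolding y_def r_def
      by (rule span_mul, rule span_diff, rule span_base, simp, rule pj)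
    have xspan: "x \<in> span (set (L @ [y]) \<union> set xs)"
    proof -
      have "x = r + proj L x" by (simp add: r_def)
      also have "r = norm r *\<^sub>R y" using False by (simp add: y_def)
      finally have "x = norm r *\<^sub>R y + proj L x" .
      moreover have "norm r *\<^sub>R y + proj L x \<in> span (set (L @ [y]) \<union> set xs)"
        using proj_in_span[of L x] span_mono[of "set L" "set (L @ [y]) \<union> set xs"]
        by (intro span_add span_mul) (auto intro: span_base)
      ultimately show ?thesis by simp
    qed
    have "span (set (L @ [y]) \<union> set xs) = span (set L \<union> set (x # xs))"
      unfolding span_eq using yspan xspan by (auto intro: span_base)
    then show ?thesis using L' by (intro exI[of _ "y # L'"]) auto
  qed
qed



lemma quad_zero:
  fixes a b :: real
  assumes h: "\<And>t. 2*t*a + t^2*b \<le> 0"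
  shows "a = 0"
proof -
  define t where "t = a / (\<bar>b\<bar> + 1)"
  have pos: "\<bar>b\<bar> + 1 > 0" by simp
  have "2*t*a + t^2*b \<le> 0" by (rule h)
  then have "(2*t*a + t^2*b) * (\<bar>b\<bar> + 1)^2 \<le> 0"
    by (simp add: mult_nonpos_nonneg)
  moreover have "(2*t*a + t^2*b) * (\<bar>b\<bar> + 1)^2 = 2*(t*(\<bar>b\<bar> + 1))*a*(\<bar>b\<bar> + 1) + (t*(\<bar>b\<bar> + 1))^2*b"
    by (simp add: algebra_simps power2_eq_square)
  moreover have "t*(\<bar>b\<bar> + 1) = a" unfolding t_def using pos by simp
  moreover have "2*a*a*(\<bar>b\<bar> + 1) + a^2*b = a^2 * (2*\<bar>b\<bar> + 2 + b)"
    by (simp add: algebra_simps power2_eq_square)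
  ultimately have "a^2 * (2*\<bar>b\<bar> + 2 + b) \<le> 0" by simp
  moreover have "2*\<bar>b\<bar> + 2 + b > 0" by (simp add: abs_if)
  ultimately have "a^2 \<le> 0" by (simp add: mult_le_0_iff)
  then show ?thesis by simp
qed

lemma compact_box_sums:
  fixes b :: "nat \<Rightarrow> 'a::real_normed_vector"
  shows "compact {(\<Sum>k<m. x k *\<^sub>R b k) | x. \<forall>k. \<bar>x k\<bar> \<le> 1}"
proof (induction m)
  case 0
  have "{(\<Sum>k<0. x k *\<^sub>R b k) | x. \<forall>k. \<bar>x k\<bar> \<le> (1::real)} = {0}"
    by (auto intro: exI[of _ "\<lambda>_. 0"])
  then show ?case by simp
next
  case (Suc m)
  let ?S = "{(\<Sum>k<m. x k *\<^sub>R b k) | x. \<forall>k. \<bar>x k\<bar> \<le> 1}"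
  have eq: "{(\<Sum>k<Suc m. x k *\<^sub>R b k) | x. \<forall>k. \<bar>x k\<bar> \<le> 1}
        = (\<lambda>z. fst z + snd z *\<^sub>R b m) ` (?S \<times> {-1..1})"
  proof (intro equalityI subsetI)
    fix y assume "y \<in> {(\<Sum>k<Suc m. x k *\<^sub>R b k) | x. \<forall>k. \<bar>x k\<bar> \<le> 1}"
    then obtain x where x: "y = (\<Sum>k<Suc m. x k *\<^sub>R b k)" "\<forall>k. \<bar>x k\<bar> \<le> 1" by blast
    then have "((\<Sum>k<m. x k *\<^sub>R b k), x m) \<in> ?S \<times> {-1..1}" by (auto simp: abs_le_iff)
    moreover have "y = (\<lambda>z. fst z + snd z *\<^sub>R b m) ((\<Sum>k<m. x k *\<^sub>R b k), x m)" using x by simp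
    ultimately show "y \<in> (\<lambda>z. fst z + snd z *\<^sub>R b m) ` (?S \<times> {-1..1})" by blast
  next
    fix y assume "y \<in> (\<lambda>z. fst z + snd z *\<^sub>R b m) ` (?S \<times> {-1..1})"
    then obtain x c where x: "y = (\<Sum>k<m. x k *\<^sub>R b k) + c *\<^sub>R b m" "\<forall>k. \<bar>x k\<bar> \<le> 1" "c \<in> {-1..1}"
      by auto
    define x' where "x' = x(m := c)"
    have "(\<Sum>k<m. x' k *\<^sub>R b k) = (\<Sum>k<m. x k *\<^sub>R b k)"
      by (intro sum.cong) (auto simp: x'_def)
    then have "y = (\<Sum>k<Suc m. x' k *\<^sub>R b k)" using x by (simp add: x'_def)
    moreover have "\<forall>k. \<bar>x' k\<bar> \<le> 1" using x by (auto simp: x'_def)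
    ultimately show "y \<in> {(\<Sum>k<Suc m. x k *\<^sub>R b k) | x. \<forall>k. \<bar>x k\<bar> \<le> 1}" by blast
  qed
  show ?case unfolding eq
    by (intro compact_continuous_image compact_Times Suc compact_Icc continuous_intros)
qed

definition sph :: "'a::real_inner list \<Rightarrow> 'a set" where
  "sph L = {u \<in> span (set L). norm u = 1}"

lemma compact_sph:
  assumes "orthonormal_list L"
  shows "compact (sph L)"
proof -
  let ?S = "{(\<Sum>k<length L. x k *\<^sub>R (L!k)) | x. \<forall>k. \<bar>x k\<bar> \<le> 1}"
  have "sph L = ?S \<inter> {u. norm u = 1}"
  proof (intro equalityI subsetI)
    fix u assume u: "u \<in> sph L"
    define x where "x k = (if k < length L then inner (L!k) u else 0)" for k
    have "u = proj L u" using span_proj[OF assms] u by (simp add: sph_def)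
    also have "\<dots> = (\<Sum>k<length L. x k *\<^sub>R L!k)" unfolding proj_def x_def by simp
    finally have "u = (\<Sum>k<length L. x k *\<^sub>R L!k)" .
    moreover have "\<bar>x k\<bar> \<le> 1" for k
    proof (cases "k < length L")
      case True
      have "\<bar>inner (L!k) u\<bar> \<le> norm (L!k) * norm u" by (rule Cauchy_Schwarz_ineq2)
      also have "\<dots> = 1" using u onl_norm[OF assms, of "L!k"] True by (simp add: sph_def)
      finally show ?thesis using True by (simp add: x_def)
    qed (simp add: x_def)
    ultimately show "u \<in> ?S \<inter> {u. norm u = 1}" using u by (auto simp: sph_def)
  next
    fix u assume "u \<in> ?S \<inter> {u. norm u = 1}"
    then obtain x where "u = (\<Sum>k<length L. x k *\<^sub>R L!k)" "norm u = 1" by auto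
    moreover have "(\<Sum>k<length L. x k *\<^sub>R L!k) \<in> span (set L)"
      by (intro span_sum span_mul span_base) auto
    ultimately show "u \<in> sph L" by (simp add: sph_def)
  qed
  moreover have "compact ?S"
    using compact_box_sums[where m="length L" and b="\<lambda>k. L!k"] by simp
  then have "compact (?S \<inter> {u. norm u = 1})"
    by (intro compact_Int_closed closed_Collect_eq continuous_intros)
  ultimately show ?thesis by simp
qed



lemma bl_rank_one: "bounded_linear (\<lambda>u. rank_one e f u)"
  unfolding rank_one_def
  by (rule bounded_linear_compose[OF bounded_linear_scaleR_left bounded_linear_inner_right])

lemma svd_exists:
  fixes F :: "'w::real_inner \<Rightarrow> 'v::real_inner"
  shows "orthonormal_list E \<Longrightarrow> bounded_linear F \<Longrightarrow> (\<forall>u. (\<forall>x\<in>set E. inner x u = 0) \<longrightarrow> F u = 0)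
    \<Longrightarrow> \<exists>n s e f. is_svd F n s e f \<and> (\<forall>i<n. f i \<in> span (set E))"
proof (induction "length E" arbitrary: E F rule: less_induct)
  case less
  note onE = less.prems(1)
  interpret F: bounded_linear F by (rule less.prems(2))
  show ?case
  proof (cases "\<forall>u. F u = 0")
    case True
    have "is_svd F 0 (\<lambda>_. 1) (\<lambda>_. 0) (\<lambda>_. 0)"
      unfolding is_svd_def using True by auto
    then show ?thesis by blast
  next
    case False
    then obtain u0 where u0: "F u0 \<noteq> 0" by blast
    have Fproj: "F u = F (proj E u)" for u
    proof -
      have "F (u - proj E u) = 0" using less.prems(3) proj_orth[OF onE] by blast
      then show ?thesis by (simp add: F.diff)
    qed
    have orth_res: "inner y (u - proj E u) = 0" if "y \<in> span (set E)" for y u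
      by (rule orth_span[OF _ that]) (simp add: proj_orth[OF onE])
    define p0 where "p0 = proj E u0"
    have p0: "p0 \<noteq> 0" "F p0 \<noteq> 0" using u0 Fproj[of u0] by (auto simp: p0_def F.zero)
    have p0s: "p0 /\<^sub>R norm p0 \<in> sph E"
      using p0 proj_in_span[of E u0] unfolding sph_def p0_def by (auto intro: span_mul)
    have "compact (sph E)" by (rule compact_sph[OF onE])
    moreover have "sph E \<noteq> {}" using p0s by blast
    moreover have "continuous_on (sph E) (\<lambda>u. norm (F u))"
      by (intro continuous_on_norm linear_continuous_on less.prems(2))
    ultimately obtain f where f: "f \<in> sph E" and fmax: "\<And>y. y \<in> sph E \<Longrightarrow> norm (F y) \<le> norm (F f)"
      using continuous_attains_sup[of "sph E" "\<lambda>u. norm (F u)"] by blast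
    have fspan: "f \<in> span (set E)" and nf: "norm f = 1" using f by (auto simp: sph_def)
    define s where "s = norm (F f)"
    have spos: "s > 0"
    proof -
      have "norm (F (p0 /\<^sub>R norm p0)) > 0" using p0 by (simp add: F.scaleR)
      then show ?thesis using fmax[OF p0s] unfolding s_def by linarith
    qed
    have bound: "norm (F u) \<le> s * norm u" if "u \<in> span (set E)" for u
    proof (cases "u = 0")
      case True then show ?thesis by (simp add: F.zero)
    next
      case False
      have "u /\<^sub>R norm u \<in> sph E" using that False by (auto simp: sph_def intro: span_mul)
      then have "norm (F (u /\<^sub>R norm u)) \<le> s" using fmax s_def by blast
      then show ?thesis using False by (simp add: F.scaleR field_simps)
    qed
    have var: "inner (F f) (F u) = 0" if "u \<in> span (set E)" "inner f u = 0" for u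
    proof (rule quad_zero)
      fix t :: real
      have "f + t *\<^sub>R u \<in> span (set E)" using fspan that(1) by (intro span_add span_mul)
      then have "norm (F (f + t *\<^sub>R u)) \<le> s * norm (f + t *\<^sub>R u)" by (rule bound)
      then have "(norm (F (f + t *\<^sub>R u)))^2 \<le> (s * norm (f + t *\<^sub>R u))^2"
        by (simp add: power_mono)
      also have "\<dots> = s^2 * (1 + t^2 * (norm u)^2)"
      proof -
        have "(norm (f + t *\<^sub>R u))^2 = inner f f + 2*t*inner f u + t^2 * inner u u"
          unfolding power2_norm_eq_inner by (simp add: inner_add_left inner_add_right inner_commute power2_eq_square algebra_simps)
        also have "\<dots> = 1 + t^2 * (norm u)^2"
          using that(2) nf by (simp add: norm_eq_1 power2_norm_eq_inner)
        finally show ?thesis by (simp add: power_mult_distrib)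
      qed
      finally have le: "(norm (F (f + t *\<^sub>R u)))^2 \<le> s^2 * (1 + t^2 * (norm u)^2)" .
      have eq2: "(norm (F (f + t *\<^sub>R u)))^2 = (norm (F f))^2 + 2*t*inner (F f) (F u) + t^2*(norm (F u))^2"
        unfolding F.add F.scaleR power2_norm_eq_inner
        by (simp add: inner_add_left inner_add_right inner_commute power2_eq_square algebra_simps)
      have "(norm (F f))^2 + 2*t*inner (F f) (F u) + t^2 * (norm (F u))^2 \<le> s^2 * (1 + t^2 * (norm u)^2)"
        using le eq2 by simp
      then show "2*t*inner (F f) (F u) + t^2 * ((norm (F u))^2 - s^2 * (norm u)^2) \<le> 0"
        by (simp add: s_def algebra_simps)
    qed
    define e where "e = (1/s) *\<^sub>R F f"
    have Ffe: "F f = s *\<^sub>R e" using spos by (simp add: e_def)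
    have ne: "norm e = 1" using spos by (simp add: e_def s_def)
    have adj: "inner e (F u) = s * inner f u" for u
    proof -
      define p where "p = proj E u"
      have Fu: "F u = F p" by (simp add: p_def Fproj[symmetric])
      have fu: "inner f u = inner f p"
        using orth_res[OF fspan, of u] by (simp add: p_def inner_diff_right)
      define p' where "p' = p - inner f p *\<^sub>R f"
      have p'span: "p' \<in> span (set E)" unfolding p'_def p_def
        using proj_in_span fspan by (intro span_diff span_mul) auto
      have fp': "inner f p' = 0" using nf by (simp add: p'_def inner_diff_right norm_eq_1)
      have "F p = inner f p *\<^sub>R F f + F p'" by (simp add: p'_def F.diff F.scaleR)
      then have "inner e (F p) = inner f p * inner e (F f) + inner e (F p')"
        by (simp add: inner_add_right)
      also have "inner e (F p') = 0" using var[OF p'span fp'] by (simp add: e_def)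
      also have "inner e (F f) = s" using ne Ffe by (simp add: norm_eq_1)
      finally show ?thesis using Fu fu by simp
    qed
    obtain E' where E': "orthonormal_list ([f] @ E')" "span (set ([f] @ E')) = span (set [f] \<union> set E)"
      using gs_extend[of "[f]" E] nf unfolding orthonormal_list_def by (auto simp: norm_eq_1)
    have spanE': "span (set (f # E')) = span (set E)"
    proof -
      have "span (set [f] \<union> set E) = span (set E)"
        using fspan unfolding span_eq by (auto intro: span_base)
      then show ?thesis using E'(2) by simp
    qed
    have onfE': "orthonormal_list (f # E')" using E'(1) by simp
    have lenE': "length E' < length E"
    proof -
      have "independent (set (f # E'))" by (rule onl_independent[OF onfE'])
      moreover have "set (f # E') \<subseteq> span (set E)" using spanE' span_superset by blast
      ultimately have "card (set (f # E')) \<le> card (set E)"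
        using independent_span_bound[of "set E" "set (f # E')"] by auto
      also have "\<dots> \<le> length E" by (rule card_length)
      finally show ?thesis using distinct_card[OF onl_distinct[OF onfE']] by simp
    qed
    have onE': "orthonormal_list E'"
      unfolding orthonormal_list_def
    proof (intro allI impI)
      fix i j assume "i < length E'" "j < length E'"
      then show "inner (E'!i) (E'!j) = (if i = j then 1 else 0)"
        using onfE'[unfolded orthonormal_list_def, rule_format, of "Suc i" "Suc j"] by simp
    qed
    have fE': "inner f x = 0" if "x \<in> set E'" for x
      using onl_orth[OF onfE', of f x] onl_distinct[OF onfE'] that by auto
    define F' where "F' = (\<lambda>u. F u - s *\<^sub>R rank_one e f u)"
    have blF': "bounded_linear F'" unfolding F'_def
      by (intro bounded_linear_sub less.prems(2) bounded_linear_compose[OF bounded_linear_scaleR_right bl_rank_one])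
    have F'van: "\<forall>u. (\<forall>x\<in>set E'. inner x u = 0) \<longrightarrow> F' u = 0"
    proof (intro allI impI)
      fix u assume u: "\<forall>x\<in>set E'. inner x u = 0"
      define p where "p = proj E u"
      have fu: "inner f u = inner f p"
        using orth_res[OF fspan, of u] by (simp add: p_def inner_diff_right)
      define d where "d = p - inner f p *\<^sub>R f"
      have dspan: "d \<in> span (set (f # E'))" unfolding spanE' d_def p_def
        using proj_in_span fspan by (intro span_diff span_mul) auto
      have dorth: "inner x d = 0" if "x \<in> set (f # E')" for x
      proof (cases "x = f")
        case True then show ?thesis using nf by (simp add: d_def inner_diff_right norm_eq_1)
      next
        case False
        then have x: "x \<in> set E'" using that by simp
        have xs: "x \<in> span (set E)" using x spanE' span_base[of x "set (f # E')"] by auto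
        have "inner x p = inner x u" using orth_res[OF xs, of u] by (simp add: p_def inner_diff_right)
        moreover have "inner x u = 0" using u x by blast
        moreover have "inner x f = 0" using fE'[OF x] by (simp add: inner_commute)
        ultimately show ?thesis by (simp add: d_def inner_diff_right)
      qed
      have "inner d d = 0" by (rule orth_span[OF dorth dspan])
      then have "d = 0" by simp
      then have "p = inner f p *\<^sub>R f" by (simp add: d_def)
      then have "F u = inner f p *\<^sub>R (s *\<^sub>R e)"
        by (metis Fproj F.scaleR Ffe p_def)
      then show "F' u = 0" by (simp add: F'_def rank_one_def fu)
    qed
    obtain n' s' e' f' where svd': "is_svd F' n' s' e' f'" and f'span: "\<forall>i<n'. f' i \<in> span (set E')"
      using less.hyps[OF lenE' onE' blF' F'van] by blast
    have s'pos: "\<forall>i<n'. s' i > 0" and one': "\<forall>i<n'. \<forall>j<n'. inner (e' i) (e' j) = (if i = j then 1 else 0)"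
      and onf': "\<forall>i<n'. \<forall>j<n'. inner (f' i) (f' j) = (if i = j then 1 else 0)"
      and F'eq: "F' = (\<lambda>u. \<Sum>i<n'. s' i *\<^sub>R rank_one (e' i) (f' i) u)"
      using svd' unfolding is_svd_def by auto
    have F'f': "F' (f' j) = s' j *\<^sub>R e' j" if "j < n'" for j
    proof -
      have "F' (f' j) = (\<Sum>i<n'. if i = j then s' j *\<^sub>R e' j else 0)"
        unfolding F'eq rank_one_def using onf' that by (intro sum.cong) auto
      then show ?thesis using that by simp
    qed
    have ee': "inner e (e' j) = 0" if "j < n'" for j
    proof -
      have "inner e (F' (f' j)) = 0" using ne by (simp add: F'_def adj inner_diff_right rank_one_def norm_eq_1)
      then have "s' j = 0 \<or> inner e (e' j) = 0" using F'f'[OF that] by simp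
      moreover have "s' j > 0" using s'pos that by blast
      ultimately show ?thesis by simp
    qed
    have ff': "inner f (f' j) = 0" if "j < n'" for j
      using orth_span[OF _ f'span[rule_format, OF that], of f] fE' by (simp add: inner_commute)
    define S where "S i = (case i of 0 \<Rightarrow> s | Suc j \<Rightarrow> s' j)" for i
    define Ee where "Ee i = (case i of 0 \<Rightarrow> e | Suc j \<Rightarrow> e' j)" for i
    define Ff where "Ff i = (case i of 0 \<Rightarrow> f | Suc j \<Rightarrow> f' j)" for i
    have "is_svd F (Suc n') S Ee Ff"
      unfolding is_svd_def
    proof (intro conjI allI impI)
      fix i assume "i < Suc n'" then show "S i > 0" using spos s'pos by (cases i) (auto simp: S_def)
    next
      fix i j assume "i < Suc n'" "j < Suc n'"
      then show "inner (Ee i) (Ee j) = (if i = j then 1 else 0)"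
        using ne ee' one' by (cases i; cases j) (auto simp: Ee_def norm_eq_1 inner_commute)
    next
      fix i j assume "i < Suc n'" "j < Suc n'"
      then show "inner (Ff i) (Ff j) = (if i = j then 1 else 0)"
        using nf ff' onf' by (cases i; cases j) (auto simp: Ff_def norm_eq_1 inner_commute)
    next
      show "F = (\<lambda>u. \<Sum>i<Suc n'. S i *\<^sub>R rank_one (Ee i) (Ff i) u)"
      proof
        fix u
        have "F u = s *\<^sub>R rank_one e f u + F' u" by (simp add: F'_def)
        also have "\<dots> = (\<Sum>i<Suc n'. S i *\<^sub>R rank_one (Ee i) (Ff i) u)"
          unfolding sum.lessThan_Suc_shift F'eq by (simp add: S_def Ee_def Ff_def)
        finally show "F u = (\<Sum>i<Suc n'. S i *\<^sub>R rank_one (Ee i) (Ff i) u)" .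
      qed
    qed
    moreover have "\<forall>i<Suc n'. Ff i \<in> span (set E)"
    proof (intro allI impI)
      fix i assume "i < Suc n'"
      then show "Ff i \<in> span (set E)"
        using fspan f'span spanE' span_mono[of "set E'" "set (f # E')"]
        by (cases i) (auto simp: Ff_def)
    qed
    ultimately show ?thesis by blast
  qed
qed



lemma power_ineq:
  fixes s :: "nat \<Rightarrow> real"
  assumes pos: "\<forall>i<n. s i > 0" and nN: "n \<le> N" and N1: "1 \<le> N" and q: "q \<ge> 1"
  shows "(\<Sum>i<n. s i powr q) powr (1/q) \<le> real N powr (max 0 (1/q - 1/2)) * sqrt (\<Sum>i<n. (s i)^2)"
proof (cases "n = 0")
  case True then show ?thesis by simp
next
  case False
  define S where "S = (\<Sum>i<n. (s i)^2)"
  define p where "p = q/2"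
  have Spos: "S > 0" unfolding S_def using False pos by (intro sum_pos) auto
  have sx: "s i powr q = ((s i)^2) powr p" if "i < n" for i
  proof -
    have "s i powr 2 = (s i)^2" using powr_realpow[of "s i" 2] pos that by simp
    then have "((s i)^2) powr p = (s i powr 2) powr p" by simp
    also have "\<dots> = s i powr q" by (simp add: powr_powr p_def)
    finally show ?thesis by simp
  qed
  have xle: "(s i)^2 \<le> S" if "i < n" for i
    unfolding S_def using that by (intro member_le_sum) auto
  have Nq: "real N powr (max 0 (1/q - 1/2)) \<ge> 0" by simp
  show ?thesis
  proof (cases "q \<ge> 2")
    case True
    have p1: "p \<ge> 1" using True by (simp add: p_def)
    have "(\<Sum>i<n. s i powr q) = (\<Sum>i<n. ((s i)^2) powr p)" using sx by simp
    also have "\<dots> = S powr p * (\<Sum>i<n. ((s i)^2 / S) powr p)"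
      using Spos by (simp add: powr_divide sum_distrib_left)
    also have "\<dots> \<le> S powr p * (\<Sum>i<n. (s i)^2 / S)"
    proof (intro mult_left_mono sum_mono)
      fix i assume i: "i \<in> {..<n}"
      show "((s i)^2 / S) powr p \<le> (s i)^2 / S"
        using i pos xle[of i] Spos p1 by (intro powr_le_one_le) auto
    qed simp
    also have "(\<Sum>i<n. (s i)^2 / S) = 1" using Spos by (simp add: S_def sum_divide_distrib[symmetric])
    finally have le: "(\<Sum>i<n. s i powr q) \<le> S powr p" by simp
    have "(\<Sum>i<n. s i powr q) powr (1/q) \<le> (S powr p) powr (1/q)"
      using le q by (intro powr_mono2) (auto intro: sum_nonneg)
    also have "\<dots> = sqrt S" using q Spos by (simp add: powr_powr p_def powr_half_sqrt)
    finally have fin: "(\<Sum>i<n. s i powr q) powr (1/q) \<le> sqrt S" .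
    have "1/q \<le> 1/2" using True by (simp add: field_simps)
    then have "max 0 (1/q - 1/2) = 0" by simp
    then show ?thesis using fin N1 by (simp add: S_def)
  next
    case False
    define th where "th = p"
    have th: "0 \<le> th" "th \<le> 1" using q False by (auto simp: th_def p_def)
    have nS: "real n / S > 0" using Spos \<open>n \<noteq> 0\<close> by simp
    have young: "((s i)^2 * (real n / S)) powr th \<le> th * ((s i)^2 * (real n / S)) + (1 - th)"
      if "i < n" for i
    proof -
      have "((s i)^2 * (real n / S)) powr th * 1 powr (1 - th) \<le> th * ((s i)^2 * (real n / S)) + (1 - th) * 1"
      proof (intro Youngs_inequality_0)
        have "s i > 0" using pos that by auto
        then show "0 < (s i)^2 * (real n / S)" using nS by (intro mult_pos_pos) auto
      qed (use th in auto)
      then show ?thesis by simp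
    qed
    have "(real n / S) powr th * (\<Sum>i<n. s i powr q) = (\<Sum>i<n. (real n / S) powr th * ((s i)^2) powr th)"
      using sx by (simp add: sum_distrib_left th_def)
    also have "\<dots> = (\<Sum>i<n. ((s i)^2 * (real n / S)) powr th)"
    proof (intro sum.cong refl)
      fix i assume "i \<in> {..<n}"
      have "((s i)^2 * (real n / S)) powr th = ((s i)^2) powr th * (real n / S) powr th"
        using nS by (meson powr_mult zero_le_power2 less_imp_le)
      then show "(real n / S) powr th * ((s i)^2) powr th = ((s i)^2 * (real n / S)) powr th" by simp
    qed
    also have "\<dots> \<le> (\<Sum>i<n. th * ((s i)^2 * (real n / S)) + (1 - th))"
      using young by (intro sum_mono) auto
    also have "\<dots> = th * (real n / S) * S + real n * (1 - th)"
      by (simp add: sum_divide_distrib sum.distrib sum_distrib_left sum_distrib_right S_def mult.assoc mult.commute)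
    also have "\<dots> = real n" using Spos by (simp add: algebra_simps)
    finally have A: "(real n / S) powr th * (\<Sum>i<n. s i powr q) \<le> real n" .
    have B: "(\<Sum>i<n. s i powr q) \<le> real n powr (1 - th) * S powr th"
    proof -
      have P: "(real n / S) powr th > 0" using Spos \<open>n \<noteq> 0\<close> by simp
      have "(\<Sum>i<n. s i powr q) \<le> real n / (real n / S) powr th"
        using A P by (simp add: pos_le_divide_eq mult.commute)
      also have "(real n / S) powr th = real n powr th / S powr th"
        using Spos by (simp add: powr_divide)
      also have "real n / (real n powr th / S powr th) = (real n / real n powr th) * S powr th"
        by simp
      also have "real n / real n powr th = real n powr (1 - th)"
        using \<open>n \<noteq> 0\<close> by (simp add: powr_diff)
      finally show ?thesis .
    qed
    have "(\<Sum>i<n. s i powr q) powr (1/q) \<le> (real n powr (1 - th) * S powr th) powr (1/q)"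
      using B q by (intro powr_mono2) (auto intro: sum_nonneg)
    also have "\<dots> = real n powr ((1 - th) * (1/q)) * S powr (th * (1/q))"
      by (simp add: powr_mult powr_powr)
    also have "(1 - th) * (1/q) = 1/q - 1/2" using q by (simp add: th_def p_def algebra_simps)
    also have "th * (1/q) = 1/2" using q by (simp add: th_def p_def)
    also have "S powr (1/2) = sqrt S" using Spos by (simp add: powr_half_sqrt)
    also have "real n powr (1/q - 1/2) * sqrt S \<le> real N powr (1/q - 1/2) * sqrt S"
    proof (intro mult_right_mono powr_mono2)
      have "1/q \<ge> 1/2" using False q by (simp add: field_simps)
      then show "0 \<le> 1/q - 1/2" by simp
    qed (use nN Spos in auto)
    finally have fin: "(\<Sum>i<n. s i powr q) powr (1/q) \<le> real N powr (1/q - 1/2) * sqrt S" .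
    have "1/q \<ge> 1/2" using False q by (simp add: field_simps)
    then have "max 0 (1/q - 1/2) = 1/q - 1/2" by simp
    then show ?thesis using fin by (simp add: S_def)
  qed
qed



lemma hs_aux:
  fixes a :: "'i \<Rightarrow> 'v::real_inner" and b :: "'i \<Rightarrow> 'w::real_inner"
    and c :: "'j \<Rightarrow> 'v" and d :: "'j \<Rightarrow> 'w"
  assumes eq: "\<And>u. (\<Sum>k\<in>I. inner (b k) u *\<^sub>R a k) = (\<Sum>j\<in>J. inner (d j) u *\<^sub>R c j)"
  shows "(\<Sum>k\<in>I. \<Sum>l\<in>I. inner (a k) (a l) * inner (b k) (b l))
       = (\<Sum>k\<in>I. \<Sum>j\<in>J. inner (d j) (b k) * inner (a k) (c j))"
proof -
  have "(\<Sum>k\<in>I. \<Sum>l\<in>I. inner (a k) (a l) * inner (b k) (b l))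
      = (\<Sum>k\<in>I. inner (a k) (\<Sum>l\<in>I. inner (b l) (b k) *\<^sub>R a l))"
    by (simp add: inner_sum_right inner_commute mult.commute)
  also have "\<dots> = (\<Sum>k\<in>I. inner (a k) (\<Sum>j\<in>J. inner (d j) (b k) *\<^sub>R c j))"
    by (simp only: eq)
  also have "\<dots> = (\<Sum>k\<in>I. \<Sum>j\<in>J. inner (d j) (b k) * inner (a k) (c j))"
    by (simp add: inner_sum_right)
  finally show ?thesis .
qed

lemma hs_inv:
  fixes a :: "'i \<Rightarrow> 'v::real_inner" and b :: "'i \<Rightarrow> 'w::real_inner"
    and c :: "'j \<Rightarrow> 'v" and d :: "'j \<Rightarrow> 'w"
  assumes eq: "\<And>u. (\<Sum>k\<in>I. inner (b k) u *\<^sub>R a k) = (\<Sum>j\<in>J. inner (d j) u *\<^sub>R c j)"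
  shows "(\<Sum>k\<in>I. \<Sum>l\<in>I. inner (a k) (a l) * inner (b k) (b l))
       = (\<Sum>j\<in>J. \<Sum>l\<in>J. inner (c j) (c l) * inner (d j) (d l))"
proof -
  have 1: "(\<Sum>k\<in>I. \<Sum>l\<in>I. inner (a k) (a l) * inner (b k) (b l))
       = (\<Sum>k\<in>I. \<Sum>j\<in>J. inner (d j) (b k) * inner (a k) (c j))"
    by (rule hs_aux[OF eq])
  have 2: "(\<Sum>j\<in>J. \<Sum>l\<in>J. inner (c j) (c l) * inner (d j) (d l))
       = (\<Sum>j\<in>J. \<Sum>k\<in>I. inner (b k) (d j) * inner (c j) (a k))"
    by (rule hs_aux) (simp add: eq)
  show ?thesis unfolding 1 2
    by (subst sum.swap) (simp add: inner_commute)
qed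

lemma svd_hs:
  assumes svd: "is_svd F n s e f"
    and Frep: "F = (\<lambda>u. \<Sum>t\<in>I. inner (b t) u *\<^sub>R a t)"
  shows "(\<Sum>i<n. (s i)^2) = (\<Sum>t\<in>I. \<Sum>t'\<in>I. inner (a t) (a t') * inner (b t) (b t'))"
proof -
  have pos: "\<forall>i<n. s i > 0" and oe: "\<forall>i<n. \<forall>j<n. inner (e i) (e j) = (if i = j then 1 else 0)"
    and of: "\<forall>i<n. \<forall>j<n. inner (f i) (f j) = (if i = j then 1 else 0)"
    and Feq: "F = (\<lambda>u. \<Sum>i<n. s i *\<^sub>R rank_one (e i) (f i) u)"
    using svd unfolding is_svd_def by auto
  have eq: "(\<Sum>i\<in>{..<n}. inner (f i) u *\<^sub>R (s i *\<^sub>R e i)) = (\<Sum>t\<in>I. inner (b t) u *\<^sub>R a t)" for u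
  proof -
    have "(\<Sum>i\<in>{..<n}. inner (f i) u *\<^sub>R (s i *\<^sub>R e i)) = F u"
      unfolding Feq rank_one_def by (simp add: scaleR_scaleR mult.commute)
    then show ?thesis unfolding Frep by simp
  qed
  have "(\<Sum>i\<in>{..<n}. \<Sum>j\<in>{..<n}. inner (s i *\<^sub>R e i) (s j *\<^sub>R e j) * inner (f i) (f j))
      = (\<Sum>t\<in>I. \<Sum>t'\<in>I. inner (a t) (a t') * inner (b t) (b t'))"
    by (rule hs_inv[OF eq])
  moreover have "(\<Sum>i\<in>{..<n}. \<Sum>j\<in>{..<n}. inner (s i *\<^sub>R e i) (s j *\<^sub>R e j) * inner (f i) (f j))
      = (\<Sum>i<n. (s i)^2)"
  proof (intro sum.cong refl)
    fix i assume i: "i \<in> {..<n}"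
    have "(\<Sum>j\<in>{..<n}. inner (s i *\<^sub>R e i) (s j *\<^sub>R e j) * inner (f i) (f j))
        = (\<Sum>j\<in>{..<n}. if j = i then (s i)^2 else 0)"
      using i oe of by (intro sum.cong refl) (auto simp: power2_eq_square)
    also have "\<dots> = (s i)^2" using i by simp
    finally show "(\<Sum>j\<in>{..<n}. inner (s i *\<^sub>R e i) (s j *\<^sub>R e j) * inner (f i) (f j)) = (s i)^2" .
  qed
  ultimately show ?thesis by simp
qed

lemma svd_rank:
  assumes svd: "is_svd F n s e f"
    and Frep: "F = (\<lambda>u. \<Sum>t\<in>I. inner (b t) u *\<^sub>R a t)" and fin: "finite I"
  shows "n \<le> card I"
proof -
  have pos: "\<forall>i<n. s i > 0" and oe: "\<forall>i<n. \<forall>j<n. inner (e i) (e j) = (if i = j then 1 else 0)"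
    and of: "\<forall>i<n. \<forall>j<n. inner (f i) (f j) = (if i = j then 1 else 0)"
    and Feq: "F = (\<lambda>u. \<Sum>i<n. s i *\<^sub>R rank_one (e i) (f i) u)"
    using svd unfolding is_svd_def by auto
  have Ffj: "F (f j) = s j *\<^sub>R e j" if "j < n" for j
  proof -
    have "F (f j) = (\<Sum>i<n. if i = j then s j *\<^sub>R e j else 0)"
      unfolding Feq rank_one_def using of that by (intro sum.cong) auto
    then show ?thesis using that by simp
  qed
  have espan: "e j \<in> span (a ` I)" if "j < n" for j
  proof -
    have "F (f j) \<in> span (a ` I)" unfolding Frep
      by (intro span_sum span_mul span_base) auto
    then have "(1 / s j) *\<^sub>R F (f j) \<in> span (a ` I)" by (rule span_mul)
    moreover have "s j \<noteq> 0" using pos that by auto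
    ultimately show ?thesis using Ffj[OF that] by simp
  qed
  have inj: "inj_on e {..<n}"
  proof (rule inj_onI)
    fix i j assume "i \<in> {..<n}" "j \<in> {..<n}" "e i = e j"
    then show "i = j" using oe by (metis lessThan_iff zero_neq_one)
  qed
  have ind: "independent (e ` {..<n})"
  proof (rule pairwise_orthogonal_independent)
    show "pairwise orthogonal (e ` {..<n})"
      unfolding pairwise_def orthogonal_def using oe by auto
    show "0 \<notin> e ` {..<n}" using oe by (metis imageE inner_zero_left lessThan_iff zero_neq_one)
  qed
  have "card (e ` {..<n}) \<le> card (a ` I)"
    using independent_span_bound[OF _ ind] fin espan by auto
  also have "\<dots> \<le> card I" by (rule card_image_le[OF fin])
  finally show ?thesis using card_image[OF inj] by simp
qed

lemma svd_exists_rep: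
  fixes a :: "nat \<Rightarrow> 'v::real_inner" and b :: "nat \<Rightarrow> 'w::real_inner"
  assumes fin: "finite I"
  shows "\<exists>n s e f. is_svd (\<lambda>u. \<Sum>t\<in>I. inner (b t) u *\<^sub>R a t) n s e f"
proof -
  obtain E where E: "orthonormal_list ([] @ E)" "span (set ([] @ E)) = span (set [] \<union> set (map b (sorted_list_of_set I)))"
    using gs_extend[of "[]" "map b (sorted_list_of_set I)"] by (auto simp: orthonormal_list_def)
  have spanE: "span (set E) = span (b ` I)" using E(2) fin by simp
  have bl: "bounded_linear (\<lambda>u. \<Sum>t\<in>I. inner (b t) u *\<^sub>R a t)"
    by (intro bounded_linear_sum bounded_linear_compose[OF bounded_linear_scaleR_left bounded_linear_inner_right])
  have van: "\<forall>u. (\<forall>x\<in>set E. inner x u = 0) \<longrightarrow> (\<Sum>t\<in>I. inner (b t) u *\<^sub>R a t) = 0"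
  proof (intro allI impI)
    fix u assume u: "\<forall>x\<in>set E. inner x u = 0"
    have "inner (b t) u = 0" if "t \<in> I" for t
    proof (rule orth_span)
      show "b t \<in> span (set E)" using spanE that by (simp add: span_base)
    qed (use u in auto)
    then show "(\<Sum>t\<in>I. inner (b t) u *\<^sub>R a t) = 0" by simp
  qed
  show ?thesis using svd_exists[OF _ bl van] E(1) by auto
qed

lemma schatten_bound:
  fixes a :: "nat \<Rightarrow> 'v::real_inner" and b :: "nat \<Rightarrow> 'w::real_inner"
  assumes fin: "finite I" and q: "q \<ge> 1" and cN: "card I \<le> N" and N1: "1 \<le> N"
  shows "schatten_norm q (\<lambda>u. \<Sum>t\<in>I. inner (b t) u *\<^sub>R a t)
      \<le> real N powr (max 0 (1/q - 1/2)) * sqrt (\<Sum>t\<in>I. \<Sum>t'\<in>I. inner (a t) (a t') * inner (b t) (b t'))"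
    and "(\<Sum>t\<in>I. \<Sum>t'\<in>I. inner (a t) (a t') * inner (b t) (b t')) \<ge> 0"
proof -
  let ?F = "\<lambda>u. \<Sum>t\<in>I. inner (b t) u *\<^sub>R a t"
  let ?Q = "\<Sum>t\<in>I. \<Sum>t'\<in>I. inner (a t) (a t') * inner (b t) (b t')"
  have ex: "\<exists>r. \<exists>n s e f. is_svd ?F n s e f \<and> r = (\<Sum>i<n. s i powr q) powr (1 / q)"
    using svd_exists_rep[OF fin, of b a] by blast
  obtain n s e f where svd: "is_svd ?F n s e f"
    and r: "schatten_norm q ?F = (\<Sum>i<n. s i powr q) powr (1 / q)"
    using someI_ex[OF ex] unfolding schatten_norm_def by blast
  have Q: "(\<Sum>i<n. (s i)^2) = ?Q" by (rule svd_hs[OF svd refl])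
  have nI: "n \<le> card I" by (rule svd_rank[OF svd refl fin])
  have pos: "\<forall>i<n. s i > 0" using svd unfolding is_svd_def by auto
  show "schatten_norm q ?F \<le> real N powr (max 0 (1/q - 1/2)) * sqrt ?Q"
    unfolding r Q[symmetric] using power_ineq[OF pos _ N1 q] nI cN by simp
  show "?Q \<ge> 0" unfolding Q[symmetric] by (intro sum_nonneg) auto
qed



lemma sign_seqs_finite: "finite (sign_seqs T)"
proof -
  have "sign_seqs T = {xs. set xs \<subseteq> {-1, 1} \<and> length xs = T}" by (auto simp: sign_seqs_def)
  then show ?thesis using finite_lists_length_eq[of "{-1,1::real}" T] by simp
qed

lemma sign_seqs_ne: "sign_seqs T \<noteq> {}"
proof -
  have "replicate T 1 \<in> sign_seqs T" by (auto simp: sign_seqs_def)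
  then show ?thesis by blast
qed

lemma sign_seqs_nth: "\<sigma> \<in> sign_seqs T \<Longrightarrow> k < T \<Longrightarrow> \<sigma>!k = -1 \<or> \<sigma>!k = 1"
  unfolding sign_seqs_def by (metis (mono_tags, lifting) insertE mem_Collect_eq nth_mem singletonD subsetD)

lemma sign_seqs_take: "\<sigma> \<in> sign_seqs T \<Longrightarrow> k \<le> T \<Longrightarrow> take k \<sigma> \<in> sign_seqs k"
  unfolding sign_seqs_def by (auto dest: in_set_takeD)

lemma flip_zero:
  assumes k: "k < T" and g: "\<And>\<sigma>. \<sigma> \<in> sign_seqs T \<Longrightarrow> g (\<sigma>[k := - \<sigma>!k]) = g \<sigma>"
  shows "(\<Sum>\<sigma>\<in>sign_seqs T. \<sigma>!k * g \<sigma>) = 0"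
proof -
  define \<phi> where "\<phi> \<sigma> = \<sigma>[k := - \<sigma>!k]" for \<sigma> :: "real list"
  define H where "H \<sigma> = \<sigma>!k * g \<sigma>" for \<sigma>
  have len: "length \<sigma> = T" if "\<sigma> \<in> sign_seqs T" for \<sigma> using that by (simp add: sign_seqs_def)
  have inv: "\<phi> (\<phi> \<sigma>) = \<sigma>" if "\<sigma> \<in> sign_seqs T" for \<sigma>
    using len[OF that] k by (simp add: \<phi>_def)
  have cl: "\<phi> \<sigma> \<in> sign_seqs T" if "\<sigma> \<in> sign_seqs T" for \<sigma>
  proof -
    have "- \<sigma>!k \<in> {-1, 1}" using sign_seqs_nth[OF that k] by auto
    moreover have "set (\<phi> \<sigma>) \<subseteq> insert (- \<sigma>!k) (set \<sigma>)"
      unfolding \<phi>_def by (rule set_update_subset_insert)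
    ultimately show ?thesis using that by (auto simp: sign_seqs_def \<phi>_def)
  qed
  have "sum (H \<circ> \<phi>) (sign_seqs T) = sum H (sign_seqs T)"
    by (rule sum.reindex_bij_witness[where i=\<phi> and j=\<phi>]) (auto simp: inv cl)
  moreover have "(H \<circ> \<phi>) \<sigma> = - H \<sigma>" if "\<sigma> \<in> sign_seqs T" for \<sigma>
    using len[OF that] k g[OF that] by (simp add: H_def \<phi>_def)
  ultimately have "sum H (sign_seqs T) = - sum H (sign_seqs T)"
    by (simp add: sum_negf[symmetric] cong: sum.cong)
  then show ?thesis by (simp add: H_def)
qed

lemma cross_zero:
  assumes jk: "j < k" and k: "k < T"
  shows "(\<Sum>\<sigma>\<in>sign_seqs T. \<sigma>!j * \<sigma>!k * C (take j \<sigma>) (take k \<sigma>)) = 0"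
proof -
  have "(\<Sum>\<sigma>\<in>sign_seqs T. \<sigma>!k * (\<sigma>!j * C (take j \<sigma>) (take k \<sigma>))) = 0"
    by (rule flip_zero[OF k]) (use jk in \<open>simp add: take_update_cancel\<close>)
  then show ?thesis by (simp add: algebra_simps)
qed



lemma EQ_bound:
  fixes v :: "nat \<Rightarrow> real list \<Rightarrow> 'v::real_inner"
    and w :: "nat \<Rightarrow> real list \<Rightarrow> 'w::real_inner"
  assumes bv: "\<And>t s. t \<in> {1..T} \<Longrightarrow> s \<in> sign_seqs (t - 1) \<Longrightarrow> norm (v t s) \<le> c1"
    and bw: "\<And>t s. t \<in> {1..T} \<Longrightarrow> s \<in> sign_seqs (t - 1) \<Longrightarrow> norm (w t s) \<le> c2"
    and c1: "c1 > 0" and c2: "c2 > 0"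
  shows "(\<Sum>\<sigma>\<in>sign_seqs T. \<Sum>t\<in>{1..T}. \<Sum>t'\<in>{1..T}.
            inner (\<sigma>!(t-1) *\<^sub>R v t (take (t-1) \<sigma>)) (\<sigma>!(t'-1) *\<^sub>R v t' (take (t'-1) \<sigma>))
          * inner (w t (take (t-1) \<sigma>)) (w t' (take (t'-1) \<sigma>)))
       \<le> real (card (sign_seqs T)) * (real T * (c1^2 * c2^2))"
proof -
  define X where "X t t' \<sigma> = inner (\<sigma>!(t-1) *\<^sub>R v t (take (t-1) \<sigma>)) (\<sigma>!(t'-1) *\<^sub>R v t' (take (t'-1) \<sigma>))
          * inner (w t (take (t-1) \<sigma>)) (w t' (take (t'-1) \<sigma>))" for t t' \<sigma>
  have Xe: "X t t' \<sigma> = \<sigma>!(t-1) * \<sigma>!(t'-1) * (inner (v t (take (t-1) \<sigma>)) (v t' (take (t'-1) \<sigma>))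
          * inner (w t (take (t-1) \<sigma>)) (w t' (take (t'-1) \<sigma>)))" for t t' \<sigma>
    by (simp add: X_def algebra_simps)
  have off: "(\<Sum>\<sigma>\<in>sign_seqs T. X t t' \<sigma>) = 0" if "t \<in> {1..T}" "t' \<in> {1..T}" "t \<noteq> t'" for t t'
  proof (cases "t < t'")
    case True
    show ?thesis unfolding Xe
      using cross_zero[of "t-1" "t'-1" T "\<lambda>l1 l2. inner (v t l1) (v t' l2) * inner (w t l1) (w t' l2)"] True that
      by simp
  next
    case False
    then have lt: "t' < t" using that by simp
    have "(\<Sum>\<sigma>\<in>sign_seqs T. X t t' \<sigma>) = (\<Sum>\<sigma>\<in>sign_seqs T. \<sigma>!(t'-1) * \<sigma>!(t-1) *
          (\<lambda>l1 l2. inner (v t l2) (v t' l1) * inner (w t l2) (w t' l1)) (take (t'-1) \<sigma>) (take (t-1) \<sigma>))"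
      unfolding Xe by (simp add: algebra_simps)
    also have "\<dots> = 0" by (rule cross_zero) (use lt that in auto)
    finally show ?thesis .
  qed
  have diag: "X t t \<sigma> \<le> c1^2 * c2^2" if "t \<in> {1..T}" "\<sigma> \<in> sign_seqs T" for t \<sigma>
  proof -
    have tk: "take (t-1) \<sigma> \<in> sign_seqs (t-1)" using sign_seqs_take[OF that(2)] that(1) by auto
    have "t - 1 < T" using that(1) by auto
    then have "\<sigma>!(t-1) = -1 \<or> \<sigma>!(t-1) = 1" using sign_seqs_nth[OF that(2)] by blast
    then have sq: "\<sigma>!(t-1) * \<sigma>!(t-1) = 1" by auto
    have "X t t \<sigma> = (norm (v t (take (t-1) \<sigma>)))^2 * (norm (w t (take (t-1) \<sigma>)))^2"
      unfolding Xe using sq by (simp add: power2_norm_eq_inner)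
    also have "\<dots> \<le> c1^2 * c2^2"
      using bv[OF that(1) tk] bw[OF that(1) tk]
      by (intro mult_mono power_mono) auto
    finally show ?thesis .
  qed
  have "(\<Sum>\<sigma>\<in>sign_seqs T. \<Sum>t\<in>{1..T}. \<Sum>t'\<in>{1..T}. X t t' \<sigma>)
      = (\<Sum>t\<in>{1..T}. \<Sum>t'\<in>{1..T}. \<Sum>\<sigma>\<in>sign_seqs T. X t t' \<sigma>)"
    by (subst sum.swap) (simp add: sum.swap[of _ "sign_seqs T"])
  also have "\<dots> = (\<Sum>t\<in>{1..T}. \<Sum>\<sigma>\<in>sign_seqs T. X t t \<sigma>)"
  proof (intro sum.cong refl)
    fix t assume t: "t \<in> {1..T}"
    have "(\<Sum>t'\<in>{1..T}. \<Sum>\<sigma>\<in>sign_seqs T. X t t' \<sigma>) = (\<Sum>t'\<in>{1..T}. if t' = t then (\<Sum>\<sigma>\<in>sign_seqs T. X t t \<sigma>) else 0)"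
      using off t by (intro sum.cong refl) auto
    also have "\<dots> = (\<Sum>\<sigma>\<in>sign_seqs T. X t t \<sigma>)" using t by simp
    finally show "(\<Sum>t'\<in>{1..T}. \<Sum>\<sigma>\<in>sign_seqs T. X t t' \<sigma>) = (\<Sum>\<sigma>\<in>sign_seqs T. X t t \<sigma>)" .
  qed
  also have "\<dots> \<le> (\<Sum>t\<in>{1..T}. \<Sum>\<sigma>\<in>sign_seqs T. c1^2 * c2^2)"
    using diag by (intro sum_mono) auto
  also have "\<dots> = real (card (sign_seqs T)) * (real T * (c1^2 * c2^2))" by simp
  finally show ?thesis unfolding X_def .
qed



theorem lemma2:
  fixes v :: "nat \<Rightarrow> real list \<Rightarrow> 'v::{real_inner, complete_space}"
    and w :: "nat \<Rightarrow> real list \<Rightarrow> 'w::{real_inner, complete_space}"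
    and c1 c2 q :: real and T :: nat
  assumes sepV: "\<exists>D::'v set. countable D \<and> closure D = UNIV"
    and sepW: "\<exists>D::'w set. countable D \<and> closure D = UNIV"
    and c1: "c1 > 0" and c2: "c2 > 0"
    and bv: "\<And>t s. t \<in> {1..T} \<Longrightarrow> s \<in> sign_seqs (t - 1) \<Longrightarrow> norm (v t s) \<le> c1"
    and bw: "\<And>t s. t \<in> {1..T} \<Longrightarrow> s \<in> sign_seqs (t - 1) \<Longrightarrow> norm (w t s) \<le> c2"
    and q: "q \<ge> 1"
  shows "measure_pmf.expectation (pmf_of_set (sign_seqs T))
           (\<lambda>\<sigma>. schatten_norm q
              (\<lambda>u. \<Sum>t=1..T. (\<sigma> ! (t - 1)) *\<^sub>R
                   rank_one (v t (take (t - 1) \<sigma>)) (w t (take (t - 1) \<sigma>)) u))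
         \<le> c1 * c2 * real T powr (max (1/2) (1/q))"
proof -
  define A where "A \<sigma> t = \<sigma>!(t-1) *\<^sub>R v t (take (t-1) \<sigma>)" for \<sigma> t
  define B where "B \<sigma> t = w t (take (t-1) \<sigma>)" for \<sigma> t
  define Q where "Q \<sigma> = (\<Sum>t\<in>{1..T}. \<Sum>t'\<in>{1..T}. inner (A \<sigma> t) (A \<sigma> t') * inner (B \<sigma> t) (B \<sigma> t'))" for \<sigma>
  define P where "P \<sigma> = schatten_norm q
              (\<lambda>u. \<Sum>t=1..T. (\<sigma> ! (t - 1)) *\<^sub>R
                   rank_one (v t (take (t - 1) \<sigma>)) (w t (take (t - 1) \<sigma>)) u)" for \<sigma>
  have Frep: "(\<lambda>u. \<Sum>t=1..T. (\<sigma> ! (t - 1)) *\<^sub>R rank_one (v t (take (t - 1) \<sigma>)) (w t (take (t - 1) \<sigma>)) u)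
      = (\<lambda>u. \<Sum>t\<in>{1..T}. inner (B \<sigma> t) u *\<^sub>R A \<sigma> t)" for \<sigma>
    by (simp add: A_def B_def rank_one_def mult.commute)
  define N where "N = card (sign_seqs T)"
  have Npos: "N > 0" unfolding N_def using sign_seqs_finite sign_seqs_ne by (simp add: card_gt_0_iff)
  have E: "measure_pmf.expectation (pmf_of_set (sign_seqs T)) P = (\<Sum>\<sigma>\<in>sign_seqs T. P \<sigma>) / N"
    unfolding N_def by (rule integral_pmf_of_set[OF sign_seqs_ne sign_seqs_finite])
  have Qnn: "Q \<sigma> \<ge> 0" for \<sigma>
    unfolding Q_def by (rule schatten_bound(2)[of "{1..T}" q "max 1 T"]) (use q in auto)
  show ?thesis
  proof (cases "T = 0")
    case True
    have "P \<sigma> \<le> 0" for \<sigma>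
    proof -
      have "P \<sigma> \<le> real 1 powr (max 0 (1/q - 1/2)) * sqrt (Q \<sigma>)"
        unfolding P_def Frep Q_def by (rule schatten_bound(1)) (use q True in auto)
      also have "Q \<sigma> = 0" using True by (simp add: Q_def)
      finally show ?thesis by simp
    qed
    then have "(\<Sum>\<sigma>\<in>sign_seqs T. P \<sigma>) \<le> 0" by (intro sum_nonpos) auto
    then have le0: "measure_pmf.expectation (pmf_of_set (sign_seqs T)) P \<le> 0"
      unfolding E using Npos by (simp add: divide_nonpos_pos)
    have R: "c1 * c2 * real T powr (max (1/2) (1/q)) = 0" using True by simp
    show ?thesis unfolding R using le0 unfolding P_def .
  next
    case False
    then have T1: "1 \<le> T" by simp
    define \<alpha> where "\<alpha> = max 0 (1/q - 1/2)"
    define Bd where "Bd = c1 * c2 * sqrt (real T)"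
    have Bpos: "Bd > 0" using c1 c2 T1 by (simp add: Bd_def)
    have Pb: "P \<sigma> \<le> real T powr \<alpha> * sqrt (Q \<sigma>)" for \<sigma>
      unfolding P_def Frep Q_def \<alpha>_def by (rule schatten_bound(1)) (use q T1 in auto)
    have amgm: "sqrt (Q \<sigma>) \<le> (Q \<sigma> / Bd + Bd) / 2" for \<sigma>
    proof -
      have "0 \<le> (sqrt (Q \<sigma>) - Bd)^2" by simp
      then have "2 * Bd * sqrt (Q \<sigma>) \<le> Q \<sigma> + Bd^2"
        using Qnn[of \<sigma>] by (simp add: power2_eq_square algebra_simps)
      then show ?thesis using Bpos by (simp add: field_simps power2_eq_square)
    qed
    have sumQ: "(\<Sum>\<sigma>\<in>sign_seqs T. Q \<sigma>) \<le> real N * (real T * (c1^2 * c2^2))"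
      unfolding Q_def A_def B_def N_def by (rule EQ_bound[OF bv bw c1 c2])
    have "(\<Sum>\<sigma>\<in>sign_seqs T. sqrt (Q \<sigma>)) \<le> (\<Sum>\<sigma>\<in>sign_seqs T. (Q \<sigma> / Bd + Bd) / 2)"
      using amgm by (intro sum_mono) auto
    also have "\<dots> = ((\<Sum>\<sigma>\<in>sign_seqs T. Q \<sigma>) / Bd + real N * Bd) / 2"
      by (simp add: sum_divide_distrib[symmetric] sum.distrib N_def)
    also have "\<dots> \<le> (real N * (real T * (c1^2 * c2^2)) / Bd + real N * Bd) / 2"
      using sumQ Bpos by (intro divide_right_mono add_right_mono) auto
    also have "real T * (c1^2 * c2^2) = Bd * Bd"
      by (simp add: Bd_def power2_eq_square)
    also have "(real N * (Bd * Bd) / Bd + real N * Bd) / 2 = real N * Bd" using Bpos by simp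
    finally have sq: "(\<Sum>\<sigma>\<in>sign_seqs T. sqrt (Q \<sigma>)) \<le> real N * Bd" .
    have "(\<Sum>\<sigma>\<in>sign_seqs T. P \<sigma>) \<le> (\<Sum>\<sigma>\<in>sign_seqs T. real T powr \<alpha> * sqrt (Q \<sigma>))"
      using Pb by (intro sum_mono) auto
    also have "\<dots> = real T powr \<alpha> * (\<Sum>\<sigma>\<in>sign_seqs T. sqrt (Q \<sigma>))" by (simp add: sum_distrib_left)
    also have "\<dots> \<le> real T powr \<alpha> * (real N * Bd)" using sq by (intro mult_left_mono) auto
    finally have "(\<Sum>\<sigma>\<in>sign_seqs T. P \<sigma>) / N \<le> real T powr \<alpha> * Bd"
      using Npos by (simp add: divide_le_eq algebra_simps)
    also have "real T powr \<alpha> * Bd = c1 * c2 * (real T powr \<alpha> * real T powr (1/2))"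
      using T1 by (simp add: Bd_def powr_half_sqrt)
    also have "real T powr \<alpha> * real T powr (1/2) = real T powr (max (1/2) (1/q))"
    proof -
      have "\<alpha> + 1/2 = max (1/2) (1/q)" by (simp add: \<alpha>_def max_def)
      then show ?thesis by (simp add: powr_add[symmetric])
    qed
    finally have fin: "(\<Sum>\<sigma>\<in>sign_seqs T. P \<sigma>) / N \<le> c1 * c2 * real T powr (max (1/2) (1/q))" .
    have "measure_pmf.expectation (pmf_of_set (sign_seqs T)) P \<le> c1 * c2 * real T powr (max (1/2) (1/q))"
      unfolding E by (rule fin)
    then show ?thesis unfolding P_def .
  qed
qed


end
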